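(* Let $\mu,\nu$ be Borel probability measures on $\mathbb{R}^d$ such that: (a) there is a bounded connected open Lipschitz domain $\Omega\subset B(0,1)$ with $\mu(dx)=\rho_\mu(x)\mathbf 1_\Omega(x)dx$ and $0<\underline\lambda_\mu\le\rho_\mu\le\overline\lambda_\mu<\infty$ a.e. on $\Omega$; (b) $\nu\ll\mathrm{Leb}$, $\operatorname{spt}\nu\subseteq B(0,1)$, $d\nu/dy\le\overline\lambda_\nu<\infty$ on $\operatorname{spt}\nu$. Let $T$ be the Monge map from $\mu$ to $\nu$, $\pi_\varepsilon$ the QOT optimizer, and let $C_{\mathrm{val}}$ be a constant with $C_{\mathrm{val}}^{-1}\varepsilon^{2/(2+d)}\le\Delta_\varepsilon\le C_{\mathrm{val}}\varepsilon^{2/(2+d)}$ for all $\varepsilon\in(0,1]$. Let $m_\varepsilon\coloneqq\int\|y-T(x)\|^2\pi_\varepsilon(dx,dy)$. Then for all $\varepsilon\in(0,1]$, $$m_\varepsilon\ge c_{\mathrm{mse}}\varepsilon^{\frac2{d+2}},\qquad c_{\mathrm{mse}}\coloneqq\frac12\left(\frac{1}{96\overline\lambda_\nu\omega_dC_{\mathrm{val}}}\right)^{2/d}.$$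
   Context: Cost $c(x,y)=\frac12\|x-y\|^2$, $P=\mu\otimes\nu$, $\mathrm{OT}(\mu,\nu)=\inf_{\pi\in\Pi(\mu,\nu)}\int c\,d\pi$; the Monge map $T=\nabla\varphi$ ($\varphi$ convex) is the Brenier optimal map with $T_\#\mu=\nu$. For $\varepsilon>0$, $\mathrm{QOT}_\varepsilon(\mu,\nu)=\inf_{\pi\in\Pi(\mu,\nu),\pi\ll P}\{\int c\,d\pi+\frac\varepsilon2\|\frac{d\pi}{dP}\|^2_{L^2(P)}\}$, $\pi_\varepsilon$ its unique optimizer, $\Delta_\varepsilon=\mathrm{QOT}_\varepsilon-\mathrm{OT}$. $\omega_d=\pi^{d/2}/\Gamma(\frac d2+1)$. *)

theory Defs
  imports "HOL-Probability.Probability"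
begin

definition quad_cost :: "'a::euclidean_space \<Rightarrow> 'a \<Rightarrow> real" where
  "quad_cost x y = (norm (x - y))^2 / 2"

definition coupling :: "'a measure \<Rightarrow> 'b measure \<Rightarrow> ('a \<times> 'b) measure \<Rightarrow> bool" where
  "coupling \<mu> \<nu> \<pi> \<longleftrightarrow> sets \<pi> = sets (\<mu> \<Otimes>\<^sub>M \<nu>) \<and>
     distr \<pi> \<mu> fst = \<mu> \<and> distr \<pi> \<nu> snd = \<nu>"

definition OT :: "'a::euclidean_space measure \<Rightarrow> 'a measure \<Rightarrow> ennreal" where
  "OT \<mu> \<nu> = (INF \<pi>\<in>{\<pi>. coupling \<mu> \<nu> \<pi>}.
       \<integral>\<^sup>+ z. ennreal (quad_cost (fst z) (snd z)) \<partial>\<pi>)"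

definition QOT_obj :: "real \<Rightarrow> 'a::euclidean_space measure \<Rightarrow> 'a measure \<Rightarrow> ('a \<times> 'a) measure \<Rightarrow> ennreal" where
  "QOT_obj \<epsilon> \<mu> \<nu> \<pi> =
     (\<integral>\<^sup>+ z. ennreal (quad_cost (fst z) (snd z)) \<partial>\<pi>)
     + ennreal (\<epsilon> / 2) * (\<integral>\<^sup>+ z. (RN_deriv (\<mu> \<Otimes>\<^sub>M \<nu>) \<pi> z)^2 \<partial>(\<mu> \<Otimes>\<^sub>M \<nu>))"

definition QOT_admissible :: "'a measure \<Rightarrow> 'a measure \<Rightarrow> ('a \<times> 'a) measure \<Rightarrow> bool" where
  "QOT_admissible \<mu> \<nu> \<pi> \<longleftrightarrow> coupling \<mu> \<nu> \<pi> \<and> absolutely_continuous (\<mu> \<Otimes>\<^sub>M \<nu>) \<pi>"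

definition QOT :: "real \<Rightarrow> 'a::euclidean_space measure \<Rightarrow> 'a measure \<Rightarrow> ennreal" where
  "QOT \<epsilon> \<mu> \<nu> = (INF \<pi>\<in>{\<pi>. QOT_admissible \<mu> \<nu> \<pi>}. QOT_obj \<epsilon> \<mu> \<nu> \<pi>)"

definition QOT_optimizer :: "real \<Rightarrow> 'a::euclidean_space measure \<Rightarrow> 'a measure \<Rightarrow> ('a \<times> 'a) measure \<Rightarrow> bool" where
  "QOT_optimizer \<epsilon> \<mu> \<nu> \<pi> \<longleftrightarrow> QOT_admissible \<mu> \<nu> \<pi> \<and> QOT_obj \<epsilon> \<mu> \<nu> \<pi> = QOT \<epsilon> \<mu> \<nu>"

text \<open>Delta_eps = QOT_eps - OT (both finite under the standing assumptions).\<close>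
definition QOT_gap :: "real \<Rightarrow> 'a::euclidean_space measure \<Rightarrow> 'a measure \<Rightarrow> real" where
  "QOT_gap \<epsilon> \<mu> \<nu> = enn2real (QOT \<epsilon> \<mu> \<nu>) - enn2real (OT \<mu> \<nu>)"

definition monge_map :: "'a::euclidean_space measure \<Rightarrow> 'a measure \<Rightarrow> ('a \<Rightarrow> 'a) \<Rightarrow> bool" where
  "monge_map \<mu> \<nu> T \<longleftrightarrow> T \<in> borel_measurable \<mu> \<and> distr \<mu> borel T = \<nu> \<and>
     (\<exists>\<phi>::'a \<Rightarrow> real. convex_on UNIV \<phi> \<and>
        (AE x in \<mu>. (\<phi> has_derivative (\<lambda>h. T x \<bullet> h)) (at x)))"

text \<open>Bounded open Lipschitz domain: boundary locally the graph of a Lipschitz function.\<close>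
definition lipschitz_domain :: "'a::euclidean_space set \<Rightarrow> bool" where
  "lipschitz_domain \<Omega> \<longleftrightarrow> open \<Omega> \<and> bounded \<Omega> \<and>
     (\<forall>p\<in>frontier \<Omega>. \<exists>r>0. \<exists>u L. \<exists>g::'a \<Rightarrow> real. norm u = 1 \<and>
        (\<forall>y z. \<bar>g y - g z\<bar> \<le> L * norm (y - z)) \<and>
        (\<forall>x\<in>ball p r. x \<in> \<Omega> \<longleftrightarrow> g (x - (x \<bullet> u) *\<^sub>R u) < x \<bullet> u))"

definition spt :: "'a::metric_space measure \<Rightarrow> 'a set" where
  "spt M = {x. \<forall>r>0. emeasure M (ball x r) > 0}"

definition omega :: "nat \<Rightarrow> real" where
  "omega d = pi powr (real d / 2) / Gamma (real d / 2 + 1)"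

end

theory Submission
  imports Defs
begin

lemma ball_sub_ball:
  fixes x y :: "'a::metric_space"
  assumes "y \<in> ball x r"
  shows "ball y (r - dist x y) \<subseteq> ball x r"
proof
  fix z assume "z \<in> ball y (r - dist x y)"
  hence "dist y z < r - dist x y" by simp
  moreover have "dist x z \<le> dist x y + dist y z" by (rule dist_triangle)
  ultimately show "z \<in> ball x r" by simp
qed

lemma spt_ball_null:
  fixes M :: "'a::euclidean_space measure"
  assumes sM: "sets M = sets borel" and y: "y \<in> ball x r" and n: "emeasure M (ball x r) = 0"
  shows "y \<notin> spt M"
proof -
  have "emeasure M (ball y (r - dist x y)) \<le> emeasure M (ball x r)"
    by (intro emeasure_mono ball_sub_ball[OF y]) (auto simp: sM)
  with n y show ?thesis unfolding spt_def
    by (auto simp: dist_commute intro!: exI[of _ "r - dist x y"])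
qed

lemma spt_compl_open:
  fixes M :: "'a::euclidean_space measure"
  assumes sM: "sets M = sets borel"
  shows "open (- spt M)"
proof (rule openI)
  fix x assume "x \<in> - spt M"
  then obtain r where r: "r > 0" "emeasure M (ball x r) = 0"
    unfolding spt_def by (auto simp: not_less)
  show "\<exists>e>0. ball x e \<subseteq> - spt M"
    using r spt_ball_null[OF sM _ r(2)] by blast
qed

lemma spt_compl_null:
  fixes M :: "'a::euclidean_space measure"
  assumes sM: "sets M = sets borel"
  shows "emeasure M (- spt M) = 0"
proof -
  define F where "F = {ball x r | x r. r > 0 \<and> emeasure M (ball x r) = 0}"
  have "- spt M \<subseteq> \<Union>F"
  proof
    fix x assume "x \<in> - spt M"
    then obtain r where r: "r > 0" "emeasure M (ball x r) = 0"
      unfolding spt_def by (auto simp: not_less)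
    hence "ball x r \<in> F" unfolding F_def by blast
    moreover have "x \<in> ball x r" using r by simp
    ultimately show "x \<in> \<Union>F" by blast
  qed
  moreover have "\<Union>F \<subseteq> - spt M"
    unfolding F_def using spt_ball_null[OF sM] by blast
  ultimately have e: "- spt M = \<Union>F" by blast
  obtain F' where F': "F' \<subseteq> F" "countable F'" "\<Union>F' = \<Union>F"
    using Lindelof[of F] unfolding F_def by auto
  have "(\<Union>i\<in>F'. id i) \<in> null_sets M"
    by (rule null_sets_UN') (use F' in \<open>auto simp: F_def null_sets_def sM\<close>)
  thus ?thesis using F' e by auto
qed

lemma dens_bound:
  fixes \<nu> :: "'a::euclidean_space measure"
  assumes g_meas: "g \<in> borel_measurable borel"
    and \<nu>_dens: "\<nu> = density lborel (\<lambda>y. ennreal (g y))"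
    and g_bound: "AE y in lborel. y \<in> spt \<nu> \<longrightarrow> g y \<le> hi"
    and S: "S \<in> sets borel"
  shows "emeasure \<nu> S \<le> ennreal hi * emeasure lborel S"
proof -
  have s\<nu>: "sets \<nu> = sets borel" using \<nu>_dens by simp
  have cl: "closed (spt \<nu>)" using spt_compl_open[OF s\<nu>] by (simp add: closed_def)
  have SS: "S \<inter> spt \<nu> \<in> sets borel" using cl S by (auto simp: borel_closed)
  have "emeasure \<nu> S \<le> emeasure \<nu> (S \<inter> spt \<nu>) + emeasure \<nu> (- spt \<nu>)"
  proof -
    have "emeasure \<nu> S \<le> emeasure \<nu> ((S \<inter> spt \<nu>) \<union> (- spt \<nu>))"
      by (intro emeasure_mono) (use cl S s\<nu> in auto)
    also have "\<dots> \<le> emeasure \<nu> (S \<inter> spt \<nu>) + emeasure \<nu> (- spt \<nu>)"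
      by (rule emeasure_subadditive) (use cl S s\<nu> in auto)
    finally show ?thesis .
  qed
  also have "emeasure \<nu> (- spt \<nu>) = 0" by (rule spt_compl_null[OF s\<nu>])
  also have "emeasure \<nu> (S \<inter> spt \<nu>) = emeasure (density lborel (\<lambda>y. ennreal (g y))) (S \<inter> spt \<nu>)"
    using \<nu>_dens by simp
  also have "\<dots> = (\<integral>\<^sup>+ y. ennreal (g y) * indicator (S \<inter> spt \<nu>) y \<partial>lborel)"
    using SS g_meas by (subst emeasure_density) auto
  also have "\<dots> \<le> (\<integral>\<^sup>+ y. ennreal hi * indicator S y \<partial>lborel)"
    using g_bound by (intro nn_integral_mono_AE) (auto simp: indicator_def intro: ennreal_leI elim!: eventually_mono)
  also have "\<dots> = ennreal hi * emeasure lborel S"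
    using S by (subst nn_integral_cmult_indicator) auto
  finally show ?thesis by simp
qed

lemma amgm_enn:
  fixes f :: ennreal and t :: real
  assumes t: "t > 0"
  shows "f * indicator A z \<le> ennreal (t/2) * f^2 + ennreal (1/(2*t)) * indicator A z"
proof (cases "z \<in> A")
  case True
  show ?thesis
  proof (cases f)
    case (real u)
    have "u \<le> t/2 * u^2 + 1/(2*t)"
    proof -
      have "0 \<le> (t*u - 1)^2 / (2*t)" using t by simp
      also have "(t*u - 1)^2 / (2*t) = t/2 * u^2 + 1/(2*t) - u"
        using t by (simp add: field_simps power2_eq_square)
      finally show ?thesis by simp
    qed
    hence "ennreal u \<le> ennreal (t/2 * u^2 + 1/(2*t))" by (rule ennreal_leI)
    also have "\<dots> = ennreal (t/2 * u^2) + ennreal (1/(2*t))"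
      using t by (intro ennreal_plus) auto
    also have "ennreal (t/2 * u^2) = ennreal (t/2) * ennreal (u^2)"
      using t by (intro ennreal_mult) auto
    also have "ennreal (u^2) = (ennreal u)^2" using real by (simp add: ennreal_power)
    finally show ?thesis using True real by simp
  next
    case top
    then show ?thesis using True t by (simp add: ennreal_mult_top)
  qed
qed simp

theorem lemmaA1:
  fixes \<mu> \<nu> :: "'a::euclidean_space measure"
    and \<Omega> :: "'a set" and \<rho>\<mu> g\<nu> :: "'a \<Rightarrow> real"
    and lo\<mu> hi\<mu> hi\<nu> Cval :: real
    and T :: "'a \<Rightarrow> 'a" and \<pi>e :: "real \<Rightarrow> ('a \<times> 'a) measure"
  assumes prob_\<mu>: "prob_space \<mu>" and prob_\<nu>: "prob_space \<nu>"
    and dom: "lipschitz_domain \<Omega>" "connected \<Omega>" "\<Omega> \<subseteq> ball 0 1"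
    and \<rho>_meas: "\<rho>\<mu> \<in> borel_measurable borel"
    and \<mu>_dens: "\<mu> = density lborel (\<lambda>x. ennreal (\<rho>\<mu> x) * indicator \<Omega> x)"
    and \<rho>_bounds: "0 < lo\<mu>" "AE x in lborel. x \<in> \<Omega> \<longrightarrow> lo\<mu> \<le> \<rho>\<mu> x \<and> \<rho>\<mu> x \<le> hi\<mu>"
    and g_meas: "g\<nu> \<in> borel_measurable borel" and g_nonneg: "\<And>y. 0 \<le> g\<nu> y"
    and \<nu>_dens: "\<nu> = density lborel (\<lambda>y. ennreal (g\<nu> y))"
    and \<nu>_spt: "spt \<nu> \<subseteq> ball 0 1"
    and g_bound: "AE y in lborel. y \<in> spt \<nu> \<longrightarrow> g\<nu> y \<le> hi\<nu>"
    and T: "monge_map \<mu> \<nu> T"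
    and \<pi>e: "\<And>\<epsilon>. 0 < \<epsilon> \<Longrightarrow> \<epsilon> \<le> 1 \<Longrightarrow> QOT_optimizer \<epsilon> \<mu> \<nu> (\<pi>e \<epsilon>)"
    and Cval_pos: "0 < Cval"
    and Cval: "\<And>\<epsilon>. 0 < \<epsilon> \<Longrightarrow> \<epsilon> \<le> 1 \<Longrightarrow>
        (1 / Cval) * \<epsilon> powr (2 / (2 + real DIM('a))) \<le> QOT_gap \<epsilon> \<mu> \<nu> \<and>
        QOT_gap \<epsilon> \<mu> \<nu> \<le> Cval * \<epsilon> powr (2 / (2 + real DIM('a)))"
  shows "\<forall>\<epsilon>. 0 < \<epsilon> \<and> \<epsilon> \<le> 1 \<longrightarrow>
     (\<integral>\<^sup>+ z. ennreal ((norm (snd z - T (fst z)))^2) \<partial>(\<pi>e \<epsilon>))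
       \<ge> ennreal ((1/2) * (1 / (96 * hi\<nu> * omega DIM('a) * Cval)) powr (2 / real DIM('a))
                  * \<epsilon> powr (2 / (real DIM('a) + 2)))"
proof (intro allI impI, elim conjE)
  fix \<epsilon> :: real assume \<epsilon>: "0 < \<epsilon>" "\<epsilon> \<le> 1"
  define d where "d = DIM('a)"
  define P where "P = \<mu> \<Otimes>\<^sub>M \<nu>"
  define \<pi> where "\<pi> = \<pi>e \<epsilon>"
  have opt: "QOT_optimizer \<epsilon> \<mu> \<nu> \<pi>" using \<pi>e \<epsilon> by (simp add: \<pi>_def)
  hence cp: "coupling \<mu> \<nu> \<pi>" and ac: "absolutely_continuous P \<pi>"
    and objeq: "QOT_obj \<epsilon> \<mu> \<nu> \<pi> = QOT \<epsilon> \<mu> \<nu>"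
    unfolding QOT_optimizer_def QOT_admissible_def P_def by auto
  have s\<pi>: "sets \<pi> = sets P" using cp unfolding coupling_def P_def by auto
  have s\<mu>: "sets \<mu> = sets borel" using \<mu>_dens by simp
  have s\<nu>: "sets \<nu> = sets borel" using \<nu>_dens by simp
  have sP: "sets P = sets (borel \<Otimes>\<^sub>M borel)" unfolding P_def by (rule sets_pair_measure_cong[OF s\<mu> s\<nu>])
  interpret \<mu>: prob_space \<mu> by fact
  interpret \<nu>: prob_space \<nu> by fact
  interpret P: prob_space P unfolding P_def by (rule prob_space_pair) fact+
  have spP: "space P = UNIV" using sets_eq_imp_space_eq[OF sP] by (simp add: space_pair_measure)
  have sp\<pi>: "space \<pi> = UNIV" using sets_eq_imp_space_eq[OF s\<pi>] spP by simp
  have sp\<mu>: "space \<mu> = UNIV" using sets_eq_imp_space_eq[OF s\<mu>] by simp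
  have fst_meas: "fst \<in> measurable \<pi> \<mu>"
    using measurable_cong_sets[OF s\<pi> refl, of \<mu>] measurable_fst[of \<mu> \<nu>] unfolding P_def by simp
  have "emeasure \<pi> (space \<pi>) = 1"
  proof -
    have "1 = emeasure \<mu> (space \<mu>)" by (simp add: \<mu>.emeasure_space_1)
    also have "\<dots> = emeasure (distr \<pi> \<mu> fst) (space \<mu>)" using cp unfolding coupling_def by simp
    also have "\<dots> = emeasure \<pi> (space \<pi>)"
      by (subst emeasure_distr[OF fst_meas sets.top]) (auto simp: sp\<mu> sp\<pi>)
    finally show ?thesis by simp
  qed
  then interpret \<pi>: prob_space \<pi> by (rule prob_spaceI)

  text \<open>Finite gap gives an L2 bound on the density.\<close>
  define f where "f = RN_deriv P \<pi>"
  define R where "R = (\<integral>\<^sup>+ z. (f z)^2 \<partial>P)"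
  define C\<pi> where "C\<pi> = (\<integral>\<^sup>+ z. ennreal (quad_cost (fst z) (snd z)) \<partial>\<pi>)"
  define e where "e = \<epsilon> powr (2 / (2 + real d))"
  have e_pos: "e > 0" using \<epsilon> by (simp add: e_def)
  have QOTeq: "QOT \<epsilon> \<mu> \<nu> = C\<pi> + ennreal (\<epsilon>/2) * R"
    using objeq unfolding QOT_obj_def C\<pi>_def R_def f_def P_def by simp
  have OTle: "OT \<mu> \<nu> \<le> C\<pi>"
    unfolding OT_def C\<pi>_def by (rule INF_lower) (use cp in simp)
  have gap: "(1 / Cval) * e \<le> enn2real (QOT \<epsilon> \<mu> \<nu>) - enn2real (OT \<mu> \<nu>)"
    and gap2: "enn2real (QOT \<epsilon> \<mu> \<nu>) - enn2real (OT \<mu> \<nu>) \<le> Cval * e"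
    using Cval[OF \<epsilon>] unfolding e_def d_def QOT_gap_def by auto
  have QOT_fin: "QOT \<epsilon> \<mu> \<nu> \<noteq> \<top>"
  proof
    assume "QOT \<epsilon> \<mu> \<nu> = \<top>"
    with gap have "(1 / Cval) * e \<le> - enn2real (OT \<mu> \<nu>)" by simp
    moreover have "(1 / Cval) * e > 0" using e_pos Cval_pos by simp
    ultimately show False using enn2real_nonneg[of "OT \<mu> \<nu>"] by linarith
  qed
  have C\<pi>_fin: "C\<pi> \<noteq> \<top>" using QOT_fin QOTeq by auto
  have R_fin: "R \<noteq> \<top>"
  proof
    assume "R = \<top>"
    hence "ennreal (\<epsilon>/2) * R = \<top>" using \<epsilon> by (simp add: ennreal_mult_top)
    thus False using QOT_fin QOTeq by auto
  qed
  have OT_fin: "OT \<mu> \<nu> \<noteq> \<top>" using OTle C\<pi>_fin by (auto simp: top_unique)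
  obtain Rr where Rr: "R = ennreal Rr" "Rr \<ge> 0" using R_fin by (cases R) auto
  obtain c1 where c1: "C\<pi> = ennreal c1" "c1 \<ge> 0" using C\<pi>_fin by (cases C\<pi>) auto
  obtain o1 where o1: "OT \<mu> \<nu> = ennreal o1" "o1 \<ge> 0" using OT_fin by (cases "OT \<mu> \<nu>") auto
  have "o1 \<le> c1" using OTle c1 o1 by simp
  have qeq: "QOT \<epsilon> \<mu> \<nu> = ennreal (c1 + \<epsilon>/2 * Rr)"
  proof -
    have "ennreal (\<epsilon>/2) * ennreal Rr = ennreal (\<epsilon>/2 * Rr)"
      using \<epsilon> Rr by (intro ennreal_mult[symmetric]) auto
    thus ?thesis using QOTeq c1 Rr \<epsilon> by (simp add: ennreal_plus)
  qed
  have "enn2real (QOT \<epsilon> \<mu> \<nu>) = c1 + \<epsilon>/2 * Rr"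
    unfolding qeq using c1 Rr \<epsilon> by (intro enn2real_ennreal) auto
  hence "c1 + \<epsilon>/2 * Rr - o1 \<le> Cval * e" using gap2 o1 by simp
  hence "\<epsilon>/2 * Rr \<le> Cval * e" using \<open>o1 \<le> c1\<close> by linarith
  hence "Rr \<le> 2 * Cval * e / \<epsilon>" using \<epsilon> by (simp add: field_simps)
  hence R_bound: "R \<le> ennreal (2 * Cval * e / \<epsilon>)" using Rr by (simp add: ennreal_leI)
  have hi_pos: "hi\<nu> > 0"
  proof (rule ccontr)
    assume "\<not> hi\<nu> > 0"
    hence "ennreal hi\<nu> = 0" by (simp add: ennreal_eq_0_iff)
    hence "emeasure \<nu> UNIV \<le> 0"
      using dens_bound[OF g_meas \<nu>_dens g_bound, of UNIV] by simp
    moreover have "emeasure \<nu> UNIV = 1"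
      using \<nu>.emeasure_space_1 sets_eq_imp_space_eq[OF s\<nu>] by simp
    ultimately show False by simp
  qed
  define \<omega> where "\<omega> = omega d"
  have \<omega>_eq: "\<omega> = unit_ball_vol (real DIM('a))" unfolding \<omega>_def omega_def unit_ball_vol_def d_def by simp
  have \<omega>_pos: "\<omega> > 0" unfolding \<omega>_eq by simp
  have d_pos: "d > 0" unfolding d_def by simp
  define K where "K = 1 / (96 * hi\<nu> * \<omega> * Cval)"
  have K_pos: "K > 0" unfolding K_def using hi_pos \<omega>_pos Cval_pos by simp
  define r2 where "r2 = K powr (2 / real d) * e"
  have r2_pos: "r2 > 0" unfolding r2_def using K_pos e_pos by simp
  define r where "r = sqrt r2"
  have r_pos: "r > 0" unfolding r_def using r2_pos by simp
  have rsq: "r^2 = r2" unfolding r_def using r2_pos by simp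
  have ed: "e powr (real d / 2) = \<epsilon> / e"
  proof -
    have "e powr (real d / 2) = \<epsilon> powr (real d / (2 + real d))"
    proof -
      have "(2 + real d) > 0" by simp
      hence "2 / (2 + real d) * (real d / 2) = real d / (2 + real d)" by (simp add: field_simps)
      thus ?thesis unfolding e_def powr_powr by simp
    qed
    moreover have "\<epsilon> powr (real d / (2 + real d)) * e = \<epsilon>"
    proof -
      have "\<epsilon> powr (real d / (2 + real d)) * e = \<epsilon> powr (real d / (2 + real d) + 2 / (2 + real d))"
        unfolding e_def by (simp add: powr_add)
      also have "real d / (2 + real d) + 2 / (2 + real d) = 1"
        by (metis add.commute add_divide_distrib div_self less_numeral_extra(3) of_nat_0_le_iff add_pos_nonneg zero_less_numeral)
      finally show ?thesis using \<epsilon> by simp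
    qed
    ultimately show ?thesis using e_pos by (simp add: field_simps)
  qed
  have rdK: "r ^ d = K * (\<epsilon> / e)"
  proof -
    have "r ^ d = (r2 powr (1/2)) powr real d"
      unfolding r_def using r2_pos by (simp add: powr_half_sqrt powr_realpow)
    also have "\<dots> = r2 powr (real d / 2)" by (simp add: powr_powr)
    also have "\<dots> = (K powr (2 / real d)) powr (real d / 2) * e powr (real d / 2)"
      unfolding r2_def using K_pos e_pos by (simp add: powr_mult)
    also have "(K powr (2 / real d)) powr (real d / 2) = K"
      using d_pos K_pos by (simp add: powr_powr)
    finally show ?thesis using ed by simp
  qed
  have rd: "\<omega> * hi\<nu> * r ^ d = \<epsilon> / (96 * Cval * e)"
    unfolding rdK K_def using hi_pos \<omega>_pos Cval_pos e_pos by (simp add: field_simps)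

  have T_meas: "T \<in> borel_measurable borel"
    using T measurable_cong_sets[OF s\<mu> refl, of borel] unfolding monge_map_def by metis
  define A where "A = {z \<in> space P. norm (snd z - T (fst z)) < r}"
  have A_sets: "A \<in> sets P"
  proof -
    have "(\<lambda>z. norm (snd z - T (fst z))) \<in> borel_measurable (borel \<Otimes>\<^sub>M borel)"
      using T_meas by measurable
    hence "(\<lambda>z. norm (snd z - T (fst z))) \<in> borel_measurable P"
      using measurable_cong_sets[OF sP refl, of borel] by metis
    thus ?thesis unfolding A_def by measurable
  qed
  have PA: "emeasure P A \<le> ennreal (\<omega> * hi\<nu> * r ^ d)"
  proof -
    have "emeasure P A = (\<integral>\<^sup>+x. emeasure \<nu> (Pair x -` A) \<partial>\<mu>)"
      unfolding P_def by (rule \<nu>.emeasure_pair_measure_alt) (use A_sets P_def in simp)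
    also have "\<dots> \<le> (\<integral>\<^sup>+x. ennreal (\<omega> * hi\<nu> * r ^ d) \<partial>\<mu>)"
    proof (rule nn_integral_mono)
      fix x
      have "Pair x -` A = ball (T x) r"
        unfolding A_def spP by (auto simp: dist_norm norm_minus_commute)
      hence "emeasure \<nu> (Pair x -` A) \<le> ennreal hi\<nu> * emeasure lborel (ball (T x) r)"
        using dens_bound[OF g_meas \<nu>_dens g_bound, of "ball (T x) r"] by simp
      also have "\<dots> = ennreal hi\<nu> * ennreal (\<omega> * r ^ d)"
        using r_pos by (simp add: emeasure_ball \<omega>_eq d_def)
      also have "\<dots> = ennreal (\<omega> * hi\<nu> * r ^ d)"
        using hi_pos \<omega>_pos r_pos by (simp add: ennreal_mult[symmetric] mult_ac)
      finally show "emeasure \<nu> (Pair x -` A) \<le> ennreal (\<omega> * hi\<nu> * r ^ d)" .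
    qed
    also have "\<dots> = ennreal (\<omega> * hi\<nu> * r ^ d)"
      by (simp add: \<mu>.emeasure_space_1)
    finally show ?thesis .
  qed
  define t where "t = \<epsilon> / (4 * Cval * e)"
  have t_pos: "t > 0" unfolding t_def using \<epsilon> Cval_pos e_pos by simp
  have f_meas: "f \<in> borel_measurable P" unfolding f_def by simp
  have \<pi>A: "emeasure \<pi> A \<le> ennreal (13/48)"
  proof -
    have "emeasure \<pi> A = emeasure (density P f) A"
      unfolding f_def using P.density_RN_deriv[OF ac s\<pi>] by simp
    also have "\<dots> = (\<integral>\<^sup>+ z. f z * indicator A z \<partial>P)"
      using A_sets f_meas by (subst emeasure_density) auto
    also have "\<dots> \<le> (\<integral>\<^sup>+ z. ennreal (t/2) * (f z)^2 + ennreal (1/(2*t)) * indicator A z \<partial>P)"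
      by (intro nn_integral_mono amgm_enn t_pos)
    also have "\<dots> = (\<integral>\<^sup>+ z. ennreal (t/2) * (f z)^2 \<partial>P) + (\<integral>\<^sup>+ z. ennreal (1/(2*t)) * indicator A z \<partial>P)"
      using f_meas A_sets by (intro nn_integral_add) auto
    also have "(\<integral>\<^sup>+ z. ennreal (t/2) * (f z)^2 \<partial>P) = ennreal (t/2) * R"
      unfolding R_def using f_meas by (intro nn_integral_cmult) auto
    also have "(\<integral>\<^sup>+ z. ennreal (1/(2*t)) * indicator A z \<partial>P) = ennreal (1/(2*t)) * emeasure P A"
      using A_sets by (rule nn_integral_cmult_indicator)
    also have "ennreal (t/2) * R + ennreal (1/(2*t)) * emeasure P A
       \<le> ennreal (t/2) * ennreal (2 * Cval * e / \<epsilon>) + ennreal (1/(2*t)) * ennreal (\<omega> * hi\<nu> * r ^ d)"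
      by (intro add_mono mult_left_mono R_bound PA) auto
    also have "ennreal (t/2) * ennreal (2 * Cval * e / \<epsilon>) = ennreal (t/2 * (2 * Cval * e / \<epsilon>))"
      using t_pos \<epsilon> Cval_pos e_pos by (intro ennreal_mult[symmetric]) auto
    also have "ennreal (1/(2*t)) * ennreal (\<omega> * hi\<nu> * r ^ d) = ennreal (1/(2*t) * (\<omega> * hi\<nu> * r ^ d))"
      using t_pos hi_pos \<omega>_pos r_pos by (intro ennreal_mult[symmetric]) auto
    also have "ennreal (t/2 * (2 * Cval * e / \<epsilon>)) + ennreal (1/(2*t) * (\<omega> * hi\<nu> * r ^ d))
        = ennreal (t/2 * (2 * Cval * e / \<epsilon>) + 1/(2*t) * (\<omega> * hi\<nu> * r ^ d))"
      using t_pos \<epsilon> Cval_pos e_pos hi_pos \<omega>_pos r_pos by (intro ennreal_plus[symmetric]) auto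
    also have "t/2 * (2 * Cval * e / \<epsilon>) + 1/(2*t) * (\<omega> * hi\<nu> * r ^ d) = 13/48"
      unfolding rd t_def using \<epsilon> Cval_pos e_pos by (simp add: field_simps)
    finally show ?thesis .
  qed
  have A_ev: "A \<in> sets \<pi>" using A_sets s\<pi> by simp
  have "measure \<pi> A \<le> 13/48"
    using \<pi>A by (simp add: \<pi>.emeasure_eq_measure)
  hence compl: "measure \<pi> (space \<pi> - A) \<ge> 1/2"
    using \<pi>.prob_compl[OF A_ev] by simp
  have "ennreal ((1/2) * (1 / (96 * hi\<nu> * omega DIM('a) * Cval)) powr (2 / real DIM('a))
                  * \<epsilon> powr (2 / (real DIM('a) + 2))) = ennreal (r2 * (1/2))"
    unfolding r2_def e_def K_def \<omega>_def d_def by (simp add: add.commute mult_ac)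
  also have "\<dots> \<le> ennreal (r2 * measure \<pi> (space \<pi> - A))"
    using compl r2_pos by (intro ennreal_leI mult_left_mono) auto
  also have "\<dots> = ennreal r2 * emeasure \<pi> (space \<pi> - A)"
    using r2_pos by (simp add: \<pi>.emeasure_eq_measure ennreal_mult)
  also have "\<dots> = (\<integral>\<^sup>+ z. ennreal r2 * indicator (space \<pi> - A) z \<partial>\<pi>)"
    using A_ev by (simp add: nn_integral_cmult_indicator)
  also have "\<dots> \<le> (\<integral>\<^sup>+ z. ennreal ((norm (snd z - T (fst z)))^2) \<partial>\<pi>)"
  proof (rule nn_integral_mono)
    fix z
    show "ennreal r2 * indicator (space \<pi> - A) z \<le> ennreal ((norm (snd z - T (fst z)))^2)"
    proof (cases "z \<in> space \<pi> - A")
      case True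
      hence "r \<le> norm (snd z - T (fst z))" unfolding A_def using spP sp\<pi> by auto
      hence "r^2 \<le> (norm (snd z - T (fst z)))^2" using r_pos by (intro power_mono) auto
      thus ?thesis using True rsq by (simp add: ennreal_leI)
    qed simp
  qed
  finally show "(\<integral>\<^sup>+ z. ennreal ((norm (snd z - T (fst z)))^2) \<partial>(\<pi>e \<epsilon>))
       \<ge> ennreal ((1/2) * (1 / (96 * hi\<nu> * omega DIM('a) * Cval)) powr (2 / real DIM('a))
                  * \<epsilon> powr (2 / (real DIM('a) + 2)))" unfolding \<pi>_def .
qed

end
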